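(* Let $\mathbf{a}=(a_n)_{n\geq 1}$ be a strong divisibility sequence. Then for every positive integer $n$, \[\mathrm{lcm}(a_1,a_2,\dots,a_n)=\gcd\left\{\binom{n}{k}_{\mathbf{a}}\,\mathrm{lcm}(a_1,\dots,a_k)\;:\; k\in\mathbb{N},\ n/2\leq k\leq n\right\}.\]
   Context: A strong divisibility sequence is a sequence of positive integers $(a_n)_{n\geq1}$ such that $\gcd(a_n,a_m)=a_{\gcd(n,m)}$ for all positive integers $n,m$. For integers $0\leq k\leq n$, the $\mathbf{a}$-binomial coefficient is $\binom{n}{k}_{\mathbf{a}}:=\frac{a_na_{n-1}\cdots a_{n-k+1}}{a_1a_2\cdots a_k}$ (empty products equal $1$); for a strong divisibility sequence these are positive integers. *)

theory Defs
  imports Main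
begin

definition strong_divisibility_seq :: "(nat \<Rightarrow> nat) \<Rightarrow> bool" where
  "strong_divisibility_seq a \<longleftrightarrow>
     (\<forall>n\<ge>1. a n > 0) \<and> (\<forall>n\<ge>1. \<forall>m\<ge>1. gcd (a n) (a m) = a (gcd n m))"

text \<open>a-binomial coefficient (a_n ... a_{n-k+1}) / (a_1 ... a_k); for strong divisibility
 sequences the quotient is an integer, so natural-number division is exact.\<close>
definition a_binom :: "(nat \<Rightarrow> nat) \<Rightarrow> nat \<Rightarrow> nat \<Rightarrow> nat" where
  "a_binom a n k = (\<Prod>i\<in>{n-k<..n}. a i) div (\<Prod>i\<in>{1..k}. a i)"

end

theory Submission imports Defs "HOL-Computational_Algebra.Primes" begin

lemma sds_pos: "strong_divisibility_seq a \<Longrightarrow> i \<ge> 1 \<Longrightarrow> a i > 0"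
  unfolding strong_divisibility_seq_def by auto

lemma sds_dvd:
  assumes "strong_divisibility_seq a" "d \<ge> 1" "i \<ge> 1" "d dvd i"
  shows "a d dvd a i"
proof -
  have "gcd (a d) (a i) = a (gcd d i)" using assms unfolding strong_divisibility_seq_def by auto
  also have "gcd d i = d" using assms(4) by (simp add: gcd_proj1_iff)
  finally show ?thesis by (metis gcd_dvd2)
qed

lemma sds_struct:
  assumes sds: "strong_divisibility_seq a"
  shows "(\<forall>i\<ge>1. \<not> q dvd a i) \<or> (\<exists>r\<ge>1. \<forall>i\<ge>1. q dvd a i \<longleftrightarrow> r dvd i)"
proof (cases "\<exists>i\<ge>1. q dvd a i")
  case False thus ?thesis by auto
next
  case True
  define r where "r = (LEAST i. i \<ge> 1 \<and> q dvd a i)"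
  have r: "r \<ge> 1 \<and> q dvd a r" unfolding r_def using True by (metis (mono_tags, lifting) LeastI)
  have rl: "\<And>i. i \<ge> 1 \<Longrightarrow> q dvd a i \<Longrightarrow> r \<le> i" unfolding r_def by (simp add: Least_le)
  have "\<forall>i\<ge>1. q dvd a i \<longleftrightarrow> r dvd i"
  proof (intro allI impI iffI)
    fix i assume i: "i \<ge> 1" "q dvd a i"
    have g1: "gcd r i \<ge> 1" using i by (simp add: Suc_le_eq)
    have "q dvd gcd (a r) (a i)" using r i by simp
    also have "gcd (a r) (a i) = a (gcd r i)" using sds r i unfolding strong_divisibility_seq_def by auto
    finally have "r \<le> gcd r i" using rl g1 by auto
    moreover have "gcd r i \<le> r" using r by (simp add: gcd_le1_nat)
    ultimately have "gcd r i = r" by simp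
    thus "r dvd i" by (metis gcd_dvd2)
  next
    fix i assume i: "i \<ge> 1" "r dvd i"
    thus "q dvd a i" using sds_dvd[OF sds] r dvd_trans by blast
  qed
  thus ?thesis using r by blast
qed

lemma card_mult0: "r \<ge> 1 \<Longrightarrow> card {i\<in>{0<..n}. r dvd (i::nat)} = n div r"
proof (induction n)
  case 0 thus ?case by simp
next
  case (Suc n)
  have "{i\<in>{0<..Suc n}. r dvd i} = (if r dvd Suc n then insert (Suc n) {i\<in>{0<..n}. r dvd i} else {i\<in>{0<..n}. r dvd i})"
    by (auto simp: le_Suc_eq)
  thus ?case using Suc by (auto simp: div_Suc dvd_eq_mod_eq_0)
qed

lemma card_mult:
  assumes "r \<ge> 1" "m \<le> n"
  shows "card {i\<in>{m<..n}. r dvd (i::nat)} = n div r - m div r"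
proof -
  have "{i\<in>{m<..n}. r dvd i} = {i\<in>{0<..n}. r dvd i} - {i\<in>{0<..m}. r dvd i}" using assms by auto
  moreover have "{i\<in>{0<..m}. r dvd i} \<subseteq> {i\<in>{0<..n}. r dvd i}" using assms by auto
  ultimately have "card {i\<in>{m<..n}. r dvd i} = card {i\<in>{0<..n}. r dvd i} - card {i\<in>{0<..m}. r dvd i}"
    by (simp add: card_Diff_subset)
  also have "\<dots> = n div r - m div r" using card_mult0[OF assms(1)] by presburger
  finally show ?thesis .
qed

lemma C_eq:
  fixes a :: "nat \<Rightarrow> nat" and m n r :: nat
  assumes "\<forall>i\<ge>1. (q dvd a i \<longleftrightarrow> r dvd i)" "r \<ge> 1" "m \<le> n"
  shows "card {j\<in>{m<..n}. q dvd a j} = n div r - m div r"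
proof -
  have "{j\<in>{m<..n}. q dvd a j} = {j\<in>{m<..n}. r dvd j}" using assms(1) by auto
  thus ?thesis using card_mult assms by simp
qed

lemma C_zero:
  fixes a :: "nat \<Rightarrow> nat" and m n :: nat
  assumes "\<forall>i\<ge>1. \<not> q dvd a i"
  shows "card {j\<in>{m<..n}. q dvd a j} = 0"
proof -
  have "{j\<in>{m<..n}. q dvd a j} = {}"
  proof safe
    fix x assume "x \<in> {m<..n}" "q dvd a x"
    hence "m < x" by simp
    hence "x \<ge> 1" by linarith
    thus "x \<in> {}" using assms \<open>q dvd a x\<close> by blast
  qed
  thus ?thesis by simp
qed

lemma div_sub:
  fixes r k n :: nat
  assumes "r > 0" "k \<le> n"
  shows "(n - k) div r + k div r \<le> n div r"
proof -
  have "(n - k) div r + k div r \<le> ((n - k) + k) div r" using div_add1_eq nat_le_iff_add by blast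
  thus ?thesis using \<open>k \<le> n\<close> by simp
qed

lemma per_e1:
  assumes sds: "strong_divisibility_seq a" and "k \<le> n"
  shows "card {j\<in>{0<..k}. q dvd a j} \<le> card {j\<in>{n-k<..n}. q dvd a j}"
  using sds_struct[OF sds, of q]
proof
  assume z: "\<forall>i\<ge>1. \<not> q dvd a i"
  have h: "card {j\<in>{0<..k}. q dvd a j} = 0" by (rule C_zero[OF z])
  show ?thesis by (metis h le0)
next
  assume "\<exists>r\<ge>1. \<forall>i\<ge>1. q dvd a i \<longleftrightarrow> r dvd i"
  then obtain r where r: "r \<ge> 1" "\<forall>i\<ge>1. q dvd a i \<longleftrightarrow> r dvd i" by blast
  show ?thesis using C_eq[OF r(2) r(1)] div_sub[of r k n] r assms by simp
qed

lemma per_e2: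
  assumes sds: "strong_divisibility_seq a" and "n \<le> 2*k" "k \<le> n" "1 \<le> i" "i \<le> n"
  shows "(if q dvd a i then 1 else 0) + card {j\<in>{0<..k}. q dvd a j}
    \<le> card {j\<in>{n-k<..n}. q dvd a j} + (if q dvd a i \<and> (\<exists>j\<in>{1..k}. q dvd a j) then 1 else 0)"
  using sds_struct[OF sds, of q]
proof
  assume z: "\<forall>i\<ge>1. \<not> q dvd a i"
  have h: "card {j\<in>{0<..k}. q dvd a j} = 0" by (rule C_zero[OF z])
  have "\<not> q dvd a i" using z assms(4) by blast
  thus ?thesis by (simp only: h) simp
next
  assume "\<exists>r\<ge>1. \<forall>i\<ge>1. q dvd a i \<longleftrightarrow> r dvd i"
  then obtain r where r: "r \<ge> 1" "\<forall>i\<ge>1. q dvd a i \<longleftrightarrow> r dvd i" by blast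
  have ds: "(n - k) div r + k div r \<le> n div r" using div_sub[of r k n] r assms by simp
  have c1: "card {j\<in>{0<..k}. q dvd a j} = k div r" using C_eq[OF r(2) r(1)] by simp
  have c2: "card {j\<in>{n-k<..n}. q dvd a j} = n div r - (n-k) div r" using C_eq[OF r(2) r(1)] by simp
  show ?thesis
  proof (cases "r dvd i")
    case False
    hence "\<not> q dvd a i" using r assms(4) by auto
    thus ?thesis unfolding c1 c2 using ds by simp
  next
    case True
    hence qi: "q dvd a i" using r assms by auto
    show ?thesis
    proof (cases "r \<le> k")
      case True
      hence "\<exists>j\<in>{1..k}. q dvd a j" using r by (intro bexI[of _ r]) auto
      thus ?thesis unfolding c1 c2 using qi ds by simp
    next
      case False
      have "r \<le> i" using \<open>r dvd i\<close> assms by (simp add: dvd_imp_le)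
      hence "n div r \<ge> 1" using assms r(1) by (simp add: Suc_le_eq div_greater_zero_iff)
      moreover have "k div r = 0" "(n-k) div r = 0" using False assms by auto
      ultimately show ?thesis unfolding c1 c2 using qi by simp
    qed
  qed
qed

lemma card_ind: "finite A \<Longrightarrow> card {x\<in>A. P x} = (\<Sum>x\<in>A. if P x then 1 else (0::nat))"
  by (simp add: sum.If_cases Int_def conj_commute)

lemma mult_card:
  assumes "prime (p::nat)" "x > 0" "multiplicity p x \<le> M"
  shows "multiplicity p x = (\<Sum>e\<in>{1..M}. if p^e dvd x then 1 else 0)"
proof -
  have p1: "p \<noteq> Suc 0" using assms(1) by (metis One_nat_def not_prime_1)
  have pd: "\<And>n. p^n dvd x \<longleftrightarrow> n \<le> multiplicity p x"
    using power_dvd_iff_le_multiplicity[of x p] assms(2) p1 by auto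
  have "{e\<in>{1..M}. p^e dvd x} = {1..multiplicity p x}"
    using assms(3) by (auto simp: pd)
  hence "card {e\<in>{1..M}. p^e dvd x} = multiplicity p x" by simp
  thus ?thesis using card_ind[of "{1..M}" "\<lambda>e. p^e dvd x"] by simp
qed

lemma mult_prod:
  assumes sds: "strong_divisibility_seq a" and p: "prime (p::nat)" and fin: "finite I"
    and I: "\<forall>i\<in>I. i \<ge> 1 \<and> multiplicity p (a i) \<le> M"
  shows "multiplicity p (\<Prod>i\<in>I. a i) = (\<Sum>e\<in>{1..M}. card {i\<in>I. p^e dvd a i})"
proof -
  have "multiplicity p (\<Prod>i\<in>I. a i) = (\<Sum>i\<in>I. multiplicity p (a i))"
  proof (rule prime_elem_multiplicity_prod_distrib)
    show "0 \<notin> a ` I" using I sds_pos[OF sds] by fastforce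
  qed (auto simp: p fin)
  also have "\<dots> = (\<Sum>i\<in>I. \<Sum>e\<in>{1..M}. if p^e dvd a i then 1 else 0)"
    using I sds_pos[OF sds] by (intro sum.cong refl mult_card[OF p]) auto
  also have "\<dots> = (\<Sum>e\<in>{1..M}. \<Sum>i\<in>I. if p^e dvd a i then 1 else 0)"
    by (rule sum.swap)
  also have "\<dots> = (\<Sum>e\<in>{1..M}. card {i\<in>I. p^e dvd a i})"
    using card_ind[OF fin] by simp
  finally show ?thesis .
qed

lemma ai_dvd:
  assumes sds: "strong_divisibility_seq a" and nk: "n \<le> 2*k" "k \<le> n" and i: "1 \<le> i" "i \<le> n"
  shows "a i dvd a_binom a n k * Lcm (a ` {1..k})"
proof -
  define num where "num = (\<Prod>j\<in>{n-k<..n}. a j)"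
  define den where "den = (\<Prod>j\<in>{0<..k}. a j)"
  define L where "L = Lcm (a ` {1..k})"
  have den_eq: "(\<Prod>j\<in>{1..k}. a j) = den" unfolding den_def by (rule prod.cong) auto
  have num0: "num > 0" unfolding num_def
    by (intro prod_pos) (auto intro!: sds_pos[OF sds])
  have den0: "den > 0" unfolding den_def
    by (intro prod_pos) (auto intro!: sds_pos[OF sds])
  have "0 \<notin> a ` {1..k}" using sds_pos[OF sds] by (metis atLeastAtMost_iff image_iff less_irrefl)
  hence L0: "L \<noteq> 0" unfolding L_def by (simp add: Lcm_0_iff)
  have ai0: "a i > 0" using sds_pos[OF sds] i by auto
  have bound: "multiplicity p (a i) + multiplicity p den \<le> multiplicity p num + multiplicity p L
     \<and> multiplicity p den \<le> multiplicity p num" if p: "prime p" for p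
  proof -
    define M where "M = (\<Sum>j\<in>{1..n}. multiplicity p (a j))"
    have Mb: "\<And>j. j \<in> {1..n} \<Longrightarrow> multiplicity p (a j) \<le> M" unfolding M_def
      by (rule member_le_sum) auto
    have mn: "multiplicity p num = (\<Sum>e\<in>{1..M}. card {j\<in>{n-k<..n}. p^e dvd a j})"
      unfolding num_def by (rule mult_prod[OF sds p]) (auto intro!: Mb)
    have md: "multiplicity p den = (\<Sum>e\<in>{1..M}. card {j\<in>{0<..k}. p^e dvd a j})"
      unfolding den_def using nk by (intro mult_prod[OF sds p]) (auto intro!: Mb)
    have mi: "multiplicity p (a i) = (\<Sum>e\<in>{1..M}. if p^e dvd a i then 1 else 0)"
      by (rule mult_card[OF p ai0]) (use i Mb in auto)
    have mL: "(\<Sum>e\<in>{1..M}. if p^e dvd a i \<and> (\<exists>j\<in>{1..k}. p^e dvd a j) then 1 else 0) \<le> multiplicity p L"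
    proof -
      have "(\<Sum>e\<in>{1..M}. if p^e dvd a i \<and> (\<exists>j\<in>{1..k}. p^e dvd a j) then 1 else 0)
          = card {e\<in>{1..M}. p^e dvd a i \<and> (\<exists>j\<in>{1..k}. p^e dvd a j)}"
        by (rule card_ind[symmetric]) simp
      also have "\<dots> \<le> card {1..multiplicity p L}"
      proof (rule card_mono)
        show "finite {1..multiplicity p L}" by simp
        show "{e\<in>{1..M}. p^e dvd a i \<and> (\<exists>j\<in>{1..k}. p^e dvd a j)} \<subseteq> {1..multiplicity p L}"
        proof
          fix e assume e: "e \<in> {e\<in>{1..M}. p^e dvd a i \<and> (\<exists>j\<in>{1..k}. p^e dvd a j)}"
          then obtain j where j: "j\<in>{1..k}" "p^e dvd a j" by auto
          have "a j dvd L" unfolding L_def using j by auto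
          hence pe: "p^e dvd L" using j dvd_trans by blast
          have nu: "\<not> is_unit p" using p not_prime_unit by blast
          have "e \<le> multiplicity p L"
            using power_dvd_iff_le_multiplicity[of L p e] L0 nu pe by blast
          thus "e \<in> {1..multiplicity p L}" using e by auto
        qed
      qed
      finally show ?thesis by simp
    qed
    have s1: "(\<Sum>e\<in>{1..M}. (if p^e dvd a i then 1 else 0) + card {j\<in>{0<..k}. p^e dvd a j})
       \<le> (\<Sum>e\<in>{1..M}. card {j\<in>{n-k<..n}. p^e dvd a j} + (if p^e dvd a i \<and> (\<exists>j\<in>{1..k}. p^e dvd a j) then 1 else 0))"
      by (rule sum_mono) (rule per_e2[OF sds nk i])
    have s2: "(\<Sum>e\<in>{1..M}. card {j\<in>{0<..k}. p^e dvd a j}) \<le> (\<Sum>e\<in>{1..M}. card {j\<in>{n-k<..n}. p^e dvd a j})"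
      by (rule sum_mono) (rule per_e1[OF sds nk(2)])
    have "multiplicity p (a i) + multiplicity p den \<le> multiplicity p num
       + (\<Sum>e\<in>{1..M}. if p^e dvd a i \<and> (\<exists>j\<in>{1..k}. p^e dvd a j) then 1 else 0)"
      unfolding mi md mn sum.distrib[symmetric] by (rule s1)
    thus ?thesis using mL s2 md mn by linarith
  qed
  have dd: "den dvd num"
    using den0 bound by (intro multiplicity_le_imp_dvd) auto
  have main: "a i * den dvd num * L"
  proof (rule multiplicity_le_imp_dvd)
    show "a i * den \<noteq> 0" using ai0 den0 by simp
    fix p :: nat assume p: "prime p"
    have "multiplicity p (a i * den) = multiplicity p (a i) + multiplicity p den"
      using ai0 den0 p by (intro prime_elem_multiplicity_mult_distrib) auto
    moreover have "multiplicity p (num * L) = multiplicity p num + multiplicity p L"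
      using num0 L0 p by (intro prime_elem_multiplicity_mult_distrib) auto
    ultimately show "multiplicity p (a i * den) \<le> multiplicity p (num * L)"
      using bound[OF p] by simp
  qed
  have ab: "a_binom a n k = num div den" unfolding a_binom_def num_def den_eq ..
  have "num = a_binom a n k * den" using dd ab by simp
  hence "a i * den dvd (a_binom a n k * L) * den" using main by (simp add: ac_simps)
  hence "a i dvd a_binom a n k * L" using den0 by (metis dvd_mult_cancel_right less_not_refl2 mult.commute nat_mult_dvd_cancel_disj)
  thus ?thesis unfolding L_def .
qed

theorem corollary2:
  fixes a :: "nat \<Rightarrow> nat" and n :: nat
  assumes "strong_divisibility_seq a" and "n \<ge> 1"
  shows "Lcm (a ` {1..n}) =
         Gcd {a_binom a n k * Lcm (a ` {1..k}) | k. n \<le> 2 * k \<and> k \<le> n}"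
proof -
  let ?S = "{a_binom a n k * Lcm (a ` {1..k}) | k. n \<le> 2 * k \<and> k \<le> n}"
  define X where "X = Lcm (a ` {1..n})"
  have key: "X dvd y" if y: "y \<in> ?S" for y
  proof -
    obtain k where k: "y = a_binom a n k * Lcm (a ` {1..k})" "n \<le> 2 * k" "k \<le> n" using y by blast
    show ?thesis unfolding X_def k(1)
      by (rule Lcm_least) (use ai_dvd[OF assms(1) k(2) k(3)] in auto)
  qed
  have "(\<Prod>j\<in>{n-n<..n}. a j) = (\<Prod>j\<in>{1..n}. a j)" by (rule prod.cong) auto
  moreover have "(\<Prod>j\<in>{1..n}. a j) > 0" by (intro prod_pos) (auto intro!: sds_pos[OF assms(1)])
  ultimately have "a_binom a n n = 1" unfolding a_binom_def by simp
  hence mem: "X \<in> ?S" unfolding X_def by force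
  have "Gcd ?S dvd X" by (rule Gcd_dvd[OF mem])
  moreover have "X dvd Gcd ?S" by (rule Gcd_greatest) (rule key)
  ultimately show ?thesis unfolding X_def by (simp add: dvd_antisym)
qed

end
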